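(* For every $\epsilon>0$ and $\delta\in(0,1)$, the minimax complexity of the stochastic global oracle for the finite-sum problem $\min_{\mathbf{w}\in\mathbb{R}^d}F(\mathbf{w})=\frac1n\sum_{i=1}^n f_i(\mathbf{w})$ over the class $\Sigma$ of all such finite sums (with arbitrary, not necessarily convex or smooth, individual functions, $F$ bounded below) satisfies $$\mathfrak{M}_{\Sigma,\mathsf{S}_f}(\epsilon,\delta)\le 2n^2\log(2n/\delta).$$
   Context: The stochastic global oracle $\mathsf{S}_f$, on each call, returns the entire function $f_i$ (a complete specification of it), for an index $i\sim\mathrm{Unif}([n])$ drawn independently at each call, without revealing $i$; computational cost other than the number of oracle calls is disregarded. For a function class $\mathcal F$ and oracle $\mathsf O$, let $\mathcal A(\mathsf O,k)$ be the class of algorithms issuing at most $k$ $\mathsf O$-queries, and $\mathbf{w}_{A(f)}$ the output of $A$ on $f$. Then $\mathfrak{M}_{\mathcal F,\mathsf O}(\epsilon,\delta)=\inf\{k\in\mathbb{N}:\exists A\in\mathcal A(\mathsf O,k)\text{ with }\sup_{f\in\mathcal F}\mathbb{P}(f(\mathbf{w}_{A(f)})-f^*>\epsilon)<\delta\}$, where $f^*$ is the infimum of $f$. *)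

theory Defs
  imports "HOL-Probability.Probability" "HOL-Library.FuncSet"
begin

definition finite_sum_obj ::
  "nat \<Rightarrow> (nat \<Rightarrow> (real ^ 'd) \<Rightarrow> real) \<Rightarrow> (real ^ 'd) \<Rightarrow> real"
  where "finite_sum_obj n fs w = (1 / real n) * (\<Sum>i<n. fs i w)"

definition Sigma_class :: "nat \<Rightarrow> (nat \<Rightarrow> (real ^ 'd) \<Rightarrow> real) set"
  where "Sigma_class n = {fs. fs \<in> {..<n} \<rightarrow>\<^sub>E UNIV \<and> bdd_below (range (finite_sum_obj n fs))}"

fun iid_list :: "nat \<Rightarrow> 'a pmf \<Rightarrow> 'a list pmf" where
  "iid_list 0 p = return_pmf []"
| "iid_list (Suc k) p = bind_pmf p (\<lambda>x. map_pmf (Cons x) (iid_list k p))"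

text \<open>Stochastic global oracle S_f, queried k times: returns the list of k functions
  fs i_1, ..., fs i_k with i_j iid uniform on {..<n} (indices not revealed).\<close>
definition oracle_answers :: "nat \<Rightarrow> (nat \<Rightarrow> 'b) \<Rightarrow> nat \<Rightarrow> 'b list pmf"
  where "oracle_answers n fs k = map_pmf (map fs) (iid_list k (pmf_of_set {..<n}))"

text \<open>An algorithm issuing at most k S_f-queries: since the oracle takes no input and
  computational cost is disregarded, it is (w.l.o.g. issuing exactly k queries) a possibly
  randomized map from the k oracle answers to an output point.\<close>
type_synonym 'd algorithm = "((real ^ ('d::finite)) \<Rightarrow> real) list \<Rightarrow> (real ^ 'd) pmf"

definition output_dist :: "nat \<Rightarrow> nat \<Rightarrow> 'd algorithm \<Rightarrow> (nat \<Rightarrow> (real ^ 'd) \<Rightarrow> real) \<Rightarrow> (real ^ 'd) pmf"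
  where "output_dist n k A fs = bind_pmf (oracle_answers n fs k) A"

definition fail_prob :: "nat \<Rightarrow> nat \<Rightarrow> 'd algorithm \<Rightarrow> real \<Rightarrow> (nat \<Rightarrow> (real ^ 'd) \<Rightarrow> real) \<Rightarrow> real"
  where "fail_prob n k A \<epsilon> fs =
    measure_pmf.prob (output_dist n k A fs)
      {w. finite_sum_obj n fs w - (INF v. finite_sum_obj n fs v) > \<epsilon>}"

text \<open>Minimax complexity M_{Sigma,S_f}(eps, delta) (infimum of the empty set = infinity).\<close>
definition minimax_complexity :: "('d::finite) itself \<Rightarrow> nat \<Rightarrow> real \<Rightarrow> real \<Rightarrow> ereal"
  where "minimax_complexity _ n \<epsilon> \<delta> =
    Inf {ereal (real k) | k. \<exists>A :: 'd algorithm.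
            (SUP fs \<in> (Sigma_class n :: (nat \<Rightarrow> (real ^ 'd) \<Rightarrow> real) set). fail_prob n k A \<epsilon> fs) < \<delta>}"

end

theory Submission
  imports Defs
begin



lemma map_pmf_bool_bernoulli:
  "map_pmf P p = bernoulli_pmf (measure_pmf.prob p {x. P x})"
proof (rule pmf_eqI)
  fix b
  have "pmf (map_pmf P p) True = measure_pmf.prob p {x. P x}"
    by (simp add: pmf_map vimage_def)
  moreover have "pmf (map_pmf P p) False = 1 - measure_pmf.prob p {x. P x}"
  proof -
    have "pmf (map_pmf P p) False = measure_pmf.prob p (- {x. P x})"
      by (simp add: pmf_map vimage_def Compl_eq)
    also have "\<dots> = 1 - measure_pmf.prob p {x. P x}"
      by (simp add: measure_pmf.prob_compl[symmetric] Compl_eq_Diff_UNIV)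
    finally show ?thesis .
  qed
  ultimately show "pmf (map_pmf P p) b = pmf (bernoulli_pmf (measure_pmf.prob p {x. P x})) b"
    by (cases b) auto
qed

lemma iid_list_count:
  "map_pmf (\<lambda>xs. length (filter P xs)) (iid_list k p) = binomial_pmf k (measure_pmf.prob p {x. P x})"
proof (induction k)
  case 0
  then show ?case by (simp add: binomial_pmf_0)
next
  case (Suc k)
  define q where "q = measure_pmf.prob p {x. P x}"
  have q: "q \<in> {0..1}" unfolding q_def by auto
  have "map_pmf (\<lambda>xs. length (filter P xs)) (iid_list (Suc k) p)
      = bind_pmf p (\<lambda>x. map_pmf (\<lambda>c. (if P x then 1 else 0) + c) (map_pmf (\<lambda>xs. length (filter P xs)) (iid_list k p)))"
    by (simp add: map_bind_pmf pmf.map_comp o_def cong: if_cong; intro bind_pmf_cong refl map_pmf_cong; simp)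
  also have "\<dots> = bind_pmf p (\<lambda>x. map_pmf (\<lambda>c. (if P x then 1 else 0) + c) (binomial_pmf k q))"
    using Suc q_def by simp
  also have "\<dots> = bind_pmf (map_pmf P p) (\<lambda>b. map_pmf (\<lambda>c. (if b then 1 else 0) + c) (binomial_pmf k q))"
    by (simp add: bind_map_pmf)
  also have "\<dots> = binomial_pmf (Suc k) q"
    by (subst binomial_pmf_Suc[OF q]) (simp add: map_pmf_bool_bernoulli q_def map_pmf_def)
  finally show ?case unfolding q_def .
qed



definition cnt :: "'a \<Rightarrow> 'a list \<Rightarrow> nat" where
  "cnt g L = length (filter (\<lambda>h. h = g) L)"

definition est :: "nat \<Rightarrow> nat \<Rightarrow> ('b \<Rightarrow> real) list \<Rightarrow> ('b \<Rightarrow> real) \<Rightarrow> real" where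
  "est n k L g = (if card (set L) = n then 1
                  else real_of_int \<lceil>real n * real (cnt g L) / real k - 1/2\<rceil>)"

definition Ghat :: "nat \<Rightarrow> nat \<Rightarrow> ('b \<Rightarrow> real) list \<Rightarrow> 'b \<Rightarrow> real" where
  "Ghat n k L w = (1 / real n) * (\<Sum>g\<in>set L. est n k L g * g w)"

lemma det:
  fixes fs :: "nat \<Rightarrow> 'b \<Rightarrow> real" and xs :: "nat list"
  assumes n: "n \<ge> 1" and k: "k > 0" and xs: "set xs \<subseteq> {..<n}"
    and noLow: "\<forall>g\<in>fs ` {..<n}. real (length (filter (\<lambda>i. fs i = g) xs))
                 > real k * (real (card {i\<in>{..<n}. fs i = g}) / real n) - real k / (2 * real n)"
    and noHigh: "card (fs ` {..<n}) \<noteq> n \<longrightarrow> (\<forall>g\<in>fs ` {..<n}. real (length (filter (\<lambda>i. fs i = g) xs))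
                 \<le> real k * (real (card {i\<in>{..<n}. fs i = g}) / real n) + real k / (2 * real n))"
  shows "Ghat n k (map fs xs) w = (1 / real n) * (\<Sum>i<n. fs i w)"
proof -
  define G where "G = fs ` {..<n}"
  define m where "m g = card {i\<in>{..<n}. fs i = g}" for g
  define L where "L = map fs xs"
  have cnt_eq: "cnt g L = length (filter (\<lambda>i. fs i = g) xs)" for g
    unfolding cnt_def L_def by (simp add: filter_map o_def)
  have m1: "m g \<ge> 1" if gG: "g \<in> G" for g
  proof -
    obtain i where "i < n" "g = fs i" using gG G_def by auto
    hence "i \<in> {i\<in>{..<n}. fs i = g}" by auto
    hence "{i\<in>{..<n}. fs i = g} \<noteq> {}" by blast
    thus ?thesis unfolding m_def by (simp add: Suc_leI card_gt_0_iff)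
  qed
  have setL: "set L = G"
  proof
    show "set L \<subseteq> G" unfolding L_def G_def using xs by auto
    show "G \<subseteq> set L"
    proof
      fix g assume g: "g \<in> G"
      have "real k * (real (m g) / real n) - real k / (2 * real n) \<ge> 0"
      proof -
        have "real (m g) \<ge> 1" using m1[OF g] by simp
        hence "real k * (real (m g) / real n) \<ge> real k * (1 / real n)"
          using n by (intro mult_left_mono divide_right_mono) auto
        moreover have "real k * (1/real n) \<ge> real k / (2 * real n)" using n by (simp add: field_simps)
        ultimately show ?thesis by linarith
      qed
      hence "real (cnt g L) > 0" using noLow g unfolding G_def m_def cnt_eq by force
      hence "filter (\<lambda>h. h = g) L \<noteq> []" unfolding cnt_def by auto
      thus "g \<in> set L" by (auto simp: filter_empty_conv)
    qed
  qed
  have fin: "finite G" unfolding G_def by simp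
  have sum_m: "(\<Sum>i<n. fs i w) = (\<Sum>g\<in>G. real (m g) * g w)"
  proof -
    have "(\<Sum>i<n. fs i w) = (\<Sum>g\<in>G. \<Sum>i\<in>{x\<in>{..<n}. fs x = g}. fs i w)"
      unfolding G_def by (rule sum.image_gen) simp
    also have "\<dots> = (\<Sum>g\<in>G. real (m g) * g w)"
      unfolding m_def by (intro sum.cong refl) simp
    finally show ?thesis .
  qed
  have estm: "est n k L g = real (m g)" if g: "g \<in> G" for g
  proof (cases "card G = n")
    case True
    have "inj_on fs {..<n}" using True unfolding G_def by (simp add: eq_card_imp_inj_on)
    obtain j where j: "j < n" "g = fs j" using g unfolding G_def by auto
    have "{i\<in>{..<n}. fs i = g} = {j}" using j \<open>inj_on fs {..<n}\<close>
      by (auto simp: inj_on_def)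
    hence "m g = 1" unfolding m_def by simp
    thus ?thesis unfolding est_def using True setL by simp
  next
    case False
    define c where "c = real (cnt g L)"
    have lo: "c > real k * (real (m g) / real n) - real k / (2 * real n)"
      using noLow g unfolding G_def m_def c_def cnt_eq by blast
    have hi: "c \<le> real k * (real (m g) / real n) + real k / (2 * real n)"
      using noHigh g False unfolding G_def m_def c_def cnt_eq by blast
    have kp: "real k > 0" "real n > 0" using k n by auto
    have a: "real n * c / real k - 1/2 > real (m g) - 1"
    proof -
      have "real n * c > real n * (real k * (real (m g) / real n) - real k / (2 * real n))"
        using lo kp by (intro mult_strict_left_mono) auto
      also have "real n * (real k * (real (m g) / real n) - real k / (2 * real n)) = real k * (real (m g) - 1/2)"
        using kp by (simp add: field_simps)
      finally have "real n * c / real k > real (m g) - 1/2" using kp by (simp add: field_simps)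
      thus ?thesis by simp
    qed
    have b: "real n * c / real k - 1/2 \<le> real (m g)"
    proof -
      have "real n * c \<le> real n * (real k * (real (m g) / real n) + real k / (2 * real n))"
        using hi kp by (intro mult_left_mono) auto
      also have "real n * (real k * (real (m g) / real n) + real k / (2 * real n)) = real k * (real (m g) + 1/2)"
        using kp by (simp add: field_simps)
      finally have "real n * c / real k \<le> real (m g) + 1/2" using kp by (simp add: field_simps)
      thus ?thesis by simp
    qed
    have "\<lceil>real n * c / real k - 1/2\<rceil> = int (m g)"
      by (rule ceiling_unique) (use a b in auto)
    thus ?thesis unfolding est_def c_def using False setL by simp
  qed
  show ?thesis
    unfolding Ghat_def L_def[symmetric] setL sum_m using estm by simp
qed


lemma iid_list_support:
  "set_pmf (iid_list k p) \<subseteq> {xs. length xs = k \<and> set xs \<subseteq> set_pmf p}"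
  by (induction k) fastforce+

lemma hoeff_low:
  fixes P :: "nat \<Rightarrow> bool"
  assumes n: "n \<ge> 1" and k: "k > 0"
  shows "measure_pmf.prob (iid_list k (pmf_of_set {..<n}))
           {xs. real (length (filter P xs)) \<le> real k * (real (card {i\<in>{..<n}. P i}) / real n) - real k / (2 * real n)}
         \<le> exp (- real k / (2 * (real n)^2))"
proof -
  define q where "q = measure_pmf.prob (pmf_of_set {..<n}) {x. P x}"
  have q: "q = real (card {i\<in>{..<n}. P i}) / real n"
    using n unfolding q_def by (subst measure_pmf_of_set) (auto simp: Int_def lessThan_empty_iff)
  have q01: "q \<in> {0..1}" unfolding q_def by auto
  have "measure_pmf.prob (iid_list k (pmf_of_set {..<n}))
           {xs. real (length (filter P xs)) \<le> real k * q - real k / (2 * real n)}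
      = measure_pmf.prob (map_pmf (\<lambda>xs. length (filter P xs)) (iid_list k (pmf_of_set {..<n})))
           {x. real x \<le> real k * q - real k / (2 * real n)}"
    by (simp add: vimage_def)
  also have "\<dots> = measure_pmf.prob (binomial_pmf k q) {x. real x \<le> real k * q - real k / (2 * real n)}"
    by (simp only: iid_list_count q_def)
  also have "\<dots> \<le> exp (-2 * (real k / (2 * real n))\<^sup>2 / real k)"
    using n by (intro binomial_distribution.prob_le[OF binomial_distribution.intro[OF q01] k]) auto
  also have "-2 * (real k / (2 * real n))\<^sup>2 / real k = - real k / (2 * (real n)^2)"
    using n k by (simp add: field_simps power2_eq_square)
  finally show ?thesis unfolding q .
qed

lemma hoeff_high:
  fixes P :: "nat \<Rightarrow> bool"
  assumes n: "n \<ge> 1" and k: "k > 0"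
  shows "measure_pmf.prob (iid_list k (pmf_of_set {..<n}))
           {xs. real (length (filter P xs)) > real k * (real (card {i\<in>{..<n}. P i}) / real n) + real k / (2 * real n)}
         \<le> exp (- real k / (2 * (real n)^2))"
proof -
  define q where "q = measure_pmf.prob (pmf_of_set {..<n}) {x. P x}"
  have q: "q = real (card {i\<in>{..<n}. P i}) / real n"
    using n unfolding q_def by (subst measure_pmf_of_set) (auto simp: Int_def lessThan_empty_iff)
  have q01: "q \<in> {0..1}" unfolding q_def by auto
  have "measure_pmf.prob (iid_list k (pmf_of_set {..<n}))
           {xs. real (length (filter P xs)) > real k * q + real k / (2 * real n)}
      \<le> measure_pmf.prob (iid_list k (pmf_of_set {..<n}))
           {xs. real (length (filter P xs)) \<ge> real k * q + real k / (2 * real n)}"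
    by (intro measure_pmf.finite_measure_mono) auto
  also have "\<dots> = measure_pmf.prob (map_pmf (\<lambda>xs. length (filter P xs)) (iid_list k (pmf_of_set {..<n})))
           {x. real x \<ge> real k * q + real k / (2 * real n)}"
    by (simp add: vimage_def)
  also have "\<dots> = measure_pmf.prob (binomial_pmf k q) {x. real x \<ge> real k * q + real k / (2 * real n)}"
    by (simp only: iid_list_count q_def)
  also have "\<dots> \<le> exp (-2 * (real k / (2 * real n))\<^sup>2 / real k)"
    using n by (intro binomial_distribution.prob_ge[OF binomial_distribution.intro[OF q01] k]) auto
  also have "-2 * (real k / (2 * real n))\<^sup>2 / real k = - real k / (2 * (real n)^2)"
    using n k by (simp add: field_simps power2_eq_square)
  finally show ?thesis unfolding q .
qed


definition alg :: "nat \<Rightarrow> nat \<Rightarrow> real \<Rightarrow> ((real ^ 'd) \<Rightarrow> real) list \<Rightarrow> (real ^ 'd) pmf" where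
  "alg n k \<epsilon> L = return_pmf (SOME w. Ghat n k L w - (INF v. Ghat n k L v) \<le> \<epsilon>)"

lemma fail_bound:
  fixes fs :: "nat \<Rightarrow> (real ^ 'd) \<Rightarrow> real"
  assumes n: "n \<ge> 1" and k: "k > 0" and eps: "\<epsilon> > 0" and fs: "fs \<in> Sigma_class n"
  shows "fail_prob n k (alg n k \<epsilon>) \<epsilon> fs \<le> (2 * real n - 1) * exp (- real k / (2 * (real n)^2))"
proof -
  define F where "F = finite_sum_obj n fs"
  define I where "I = iid_list k (pmf_of_set {..<n})"
  define G where "G = fs ` {..<n}"
  define e where "e = exp (- real k / (2 * (real n)^2))"
  define pt where "pt L = (SOME w. Ghat n k L w - (INF v. Ghat n k L v) \<le> \<epsilon>)" for L :: "((real ^ 'd) \<Rightarrow> real) list"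
  define Low where "Low g = {xs. real (length (filter (\<lambda>i. fs i = g) xs)) \<le> real k * (real (card {i\<in>{..<n}. fs i = g}) / real n) - real k / (2 * real n)}" for g
  define High where "High g = {xs. real (length (filter (\<lambda>i. fs i = g) xs)) > real k * (real (card {i\<in>{..<n}. fs i = g}) / real n) + real k / (2 * real n)}" for g
  define Bad where "Bad = (\<Union>g\<in>G. Low g) \<union> (if card G = n then {} else \<Union>g\<in>G. High g)"
  define S where "S = {w. F w - (INF v. F v) > \<epsilon>}"
  have bdd: "bdd_below (range F)" using fs unfolding Sigma_class_def F_def by auto
  have od: "output_dist n k (alg n k \<epsilon>) fs = map_pmf (\<lambda>xs. pt (map fs xs)) I"
    unfolding output_dist_def oracle_answers_def alg_def pt_def I_def
    by (simp add: map_pmf_def bind_assoc_pmf bind_return_pmf)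
  have fp: "fail_prob n k (alg n k \<epsilon>) \<epsilon> fs = measure_pmf.prob I {xs. pt (map fs xs) \<in> S}"
    unfolding fail_prob_def od S_def F_def by (simp add: vimage_def)
  have sub: "{xs. pt (map fs xs) \<in> S} \<inter> set_pmf I \<subseteq> Bad"
  proof
    fix xs assume A: "xs \<in> {xs. pt (map fs xs) \<in> S} \<inter> set_pmf I"
    show "xs \<in> Bad"
    proof (rule ccontr)
      assume nb: "xs \<notin> Bad"
      have xs: "set xs \<subseteq> {..<n}" using A iid_list_support[of k "pmf_of_set {..<n}"] n
        unfolding I_def by (auto simp: lessThan_empty_iff)
      have noLow: "\<forall>g\<in>fs ` {..<n}. real (length (filter (\<lambda>i. fs i = g) xs))
                 > real k * (real (card {i\<in>{..<n}. fs i = g}) / real n) - real k / (2 * real n)"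
        using nb unfolding Bad_def Low_def G_def by (auto simp: not_le)
      have noHigh: "card (fs ` {..<n}) \<noteq> n \<longrightarrow> (\<forall>g\<in>fs ` {..<n}. real (length (filter (\<lambda>i. fs i = g) xs))
                 \<le> real k * (real (card {i\<in>{..<n}. fs i = g}) / real n) + real k / (2 * real n))"
        using nb unfolding Bad_def High_def G_def by (auto simp: not_less)
      have eq: "Ghat n k (map fs xs) = F"
        using det[OF n k xs noLow noHigh] unfolding F_def finite_sum_obj_def by auto
      obtain w where "F w < (INF v. F v) + \<epsilon>"
        using cInf_less_iff[of "range F" "(INF v. F v) + \<epsilon>"] bdd eps by auto
      hence ex: "\<exists>w. F w - (INF v. F v) \<le> \<epsilon>" by (intro exI[of _ w]) simp
      have "F (pt (map fs xs)) - (INF v. F v) \<le> \<epsilon>"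
        unfolding pt_def eq by (rule someI_ex[OF ex])
      moreover have "pt (map fs xs) \<in> S" using A by simp
      ultimately show False unfolding S_def by simp
    qed
  qed
  have finG: "finite G" unfolding G_def by simp
  have cardG: "card G \<le> n" unfolding G_def using card_image_le[of "{..<n}" fs] by simp
  have lowb: "measure_pmf.prob I (Low g) \<le> e" for g
    unfolding I_def Low_def e_def by (rule hoeff_low[OF n k])
  have highb: "measure_pmf.prob I (High g) \<le> e" for g
    unfolding I_def High_def e_def by (rule hoeff_high[OF n k])
  have sL: "measure_pmf.prob I (\<Union>g\<in>G. Low g) \<le> real (card G) * e"
  proof -
    have "measure_pmf.prob I (\<Union>g\<in>G. Low g) \<le> (\<Sum>g\<in>G. measure_pmf.prob I (Low g))"
      by (rule measure_pmf.finite_measure_subadditive_finite[OF finG]) auto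
    also have "\<dots> \<le> real (card G) * e" by (rule sum_bounded_above[OF lowb])
    finally show ?thesis .
  qed
  have sH: "measure_pmf.prob I (\<Union>g\<in>G. High g) \<le> real (card G) * e"
  proof -
    have "measure_pmf.prob I (\<Union>g\<in>G. High g) \<le> (\<Sum>g\<in>G. measure_pmf.prob I (High g))"
      by (rule measure_pmf.finite_measure_subadditive_finite[OF finG]) auto
    also have "\<dots> \<le> real (card G) * e" by (rule sum_bounded_above[OF highb])
    finally show ?thesis .
  qed
  have e0: "e \<ge> 0" unfolding e_def by simp
  have "fail_prob n k (alg n k \<epsilon>) \<epsilon> fs = measure_pmf.prob I ({xs. pt (map fs xs) \<in> S} \<inter> set_pmf I)"
    unfolding fp by (simp add: measure_Int_set_pmf)
  also have "\<dots> \<le> measure_pmf.prob I Bad"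
    by (rule measure_pmf.finite_measure_mono[OF sub]) auto
  also have "\<dots> \<le> measure_pmf.prob I (\<Union>g\<in>G. Low g) + measure_pmf.prob I (if card G = n then {} else \<Union>g\<in>G. High g)"
    unfolding Bad_def by (rule measure_Un_le) auto
  also have "\<dots> \<le> (2 * real n - 1) * e"
  proof (cases "card G = n")
    case True
    have "real (card G) * e \<le> (2 * real n - 1) * e"
      using e0 n True by (intro mult_right_mono) auto
    then show ?thesis using sL True by simp
  next
    case False
    hence "real (card G) \<le> real n - 1" using cardG by linarith
    hence "real (card G) * e + real (card G) * e \<le> (2 * real n - 1) * e"
      using e0 mult_right_mono[of "2 * real (card G)" "2 * real n - 1" e] by (simp add: algebra_simps)
    then show ?thesis using sL sH False by (simp add: mult.commute)
  qed
  finally show ?thesis unfolding e_def .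
qed



lemma arith_main:
  fixes n :: nat and \<delta> :: real
  assumes n: "n \<ge> 1" and d: "0 < \<delta>" "\<delta> < 1"
  defines "B \<equiv> 2 * (real n)^2 * ln (2 * real n / \<delta>)"
  shows "nat \<lfloor>B\<rfloor> > 0" "real (nat \<lfloor>B\<rfloor>) \<le> B"
    "(2 * real n - 1) * exp (- real (nat \<lfloor>B\<rfloor>) / (2 * (real n)^2)) < \<delta>"
proof -
  define N where "N = real n"
  have N1: "N \<ge> 1" using n N_def by simp
  define L where "L = ln (2 * N / \<delta>)"
  have e12: "exp (1/2::real) \<le> 1 + 1/2 + (1/2)^2" by (rule exp_bound) auto
  have r: "2 * N / \<delta> > 2" using N1 d by (simp add: field_simps)
  have "exp (1/2) < 2 * N / \<delta>" using e12 r by (simp add: power2_eq_square)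
  hence "ln (exp (1/2)) < ln (2 * N / \<delta>)" using r by (subst ln_less_cancel_iff) auto
  hence L: "L > 1/2" unfolding L_def by simp
  have BL: "B = 2 * N^2 * L" unfolding B_def N_def L_def by simp
  have N2: "N^2 \<ge> 1" using N1 by simp
  have N2p: "N^2 > 0" "N^2 \<noteq> 0" using N2 by auto
  have B1: "B > 1"
  proof -
    have "N^2 * L \<ge> 1 * L" using N2 L by (intro mult_right_mono) auto
    hence "2 * N^2 * L \<ge> 2 * L" by simp
    thus ?thesis using BL L by linarith
  qed
  hence fl: "\<lfloor>B\<rfloor> \<ge> 1" by linarith
  show "nat \<lfloor>B\<rfloor> > 0" using fl by simp
  have kB: "real (nat \<lfloor>B\<rfloor>) = of_int \<lfloor>B\<rfloor>" using fl by simp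
  show "real (nat \<lfloor>B\<rfloor>) \<le> B" unfolding kB by simp
  have kB1: "real (nat \<lfloor>B\<rfloor>) > B - 1" unfolding kB by linarith
  define x where "x = 1 / (2 * N^2)"
  have x0: "0 \<le> x" "x \<le> 1/2" unfolding x_def using N2 by (auto simp: field_simps divide_le_eq_1)
  have "- real (nat \<lfloor>B\<rfloor>) / (2 * N^2) < - (B - 1) / (2 * N^2)"
    using kB1 N2 by (intro divide_strict_right_mono) auto
  also have "- (B - 1) / (2 * N^2) = - L + x" unfolding BL x_def using N2p by (simp add: field_simps)
  finally have "exp (- real (nat \<lfloor>B\<rfloor>) / (2 * N^2)) < exp (- L + x)" by simp
  also have "exp (- L + x) = (\<delta> / (2 * N)) * exp x"
  proof -
    have "exp (- L + x) = exp x / exp L" by (simp add: exp_diff)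
    also have "exp L = 2 * N / \<delta>" unfolding L_def using d N1 by simp
    finally show ?thesis by simp
  qed
  finally have E: "exp (- real (nat \<lfloor>B\<rfloor>) / (2 * N^2)) < (\<delta> / (2 * N)) * exp x" .
  have ex: "exp x \<le> 1 + x + x^2" by (rule exp_bound) (use x0 in auto)
  have xx: "x * x \<le> x * (1/2)" by (rule mult_left_mono) (use x0 in auto)
  have xx2: "x + x^2 \<le> 3/2 * x" using xx by (simp add: power2_eq_square)
  have N21: "2 * N - 1 \<ge> 0" using N1 by simp
  have sq: "N^2 - (2*N - 1) = (N - 1)^2" by (simp add: power2_eq_square algebra_simps)
  have le1: "2 * N - 1 \<le> N^2" using sq zero_le_power2[of "N - 1"] by linarith
  have q1: "(2*N - 1) / N^2 \<le> 1" using le1 N2p by (simp add: divide_le_eq_1)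
  have "(2*N - 1) * (x + x^2) \<le> (2*N - 1) * (3/2 * x)" by (rule mult_left_mono[OF xx2 N21])
  also have "\<dots> = 3/4 * ((2*N - 1) / N^2)" unfolding x_def using N2p by (simp add: field_simps)
  also have "\<dots> \<le> 3/4 * 1" using q1 by (intro mult_left_mono) auto
  finally have lt: "(2 * N - 1) * (x + x^2) < 1" by simp
  have "(2 * N - 1) * exp x \<le> (2 * N - 1) * (1 + x + x^2)" by (rule mult_left_mono[OF ex N21])
  also have "\<dots> = (2 * N - 1) + (2 * N - 1) * (x + x^2)" by (simp add: algebra_simps)
  finally have F: "(2 * N - 1) * exp x < 2 * N" using lt by linarith
  have "(2 * N - 1) * exp (- real (nat \<lfloor>B\<rfloor>) / (2 * N^2)) < (2 * N - 1) * ((\<delta> / (2 * N)) * exp x)"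
    using E N1 by (intro mult_strict_left_mono) auto
  also have "\<dots> = \<delta> * ((2 * N - 1) * exp x) / (2 * N)" using N1 by (simp add: field_simps)
  also have "\<dots> < \<delta> * (2 * N) / (2 * N)"
    using F d N1 by (intro divide_strict_right_mono mult_strict_left_mono) auto
  also have "\<dots> = \<delta>" using N1 by simp
  finally show "(2 * real n - 1) * exp (- real (nat \<lfloor>B\<rfloor>) / (2 * (real n)^2)) < \<delta>"
    unfolding N_def .
qed


theorem theorem2:
  fixes n :: nat and \<epsilon> \<delta> :: real
  assumes "n \<ge> 1" and "\<epsilon> > 0" and "0 < \<delta>" and "\<delta> < 1"
  shows "minimax_complexity TYPE('d::finite) n \<epsilon> \<delta>
           \<le> ereal (2 * (real n)^2 * ln (2 * real n / \<delta>))"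
proof -
  note n = assms(1) and eps = assms(2) and d = assms(3,4)
  define B where "B = 2 * (real n)^2 * ln (2 * real n / \<delta>)"
  define k where "k = nat \<lfloor>B\<rfloor>"
  have k0: "k > 0" and kB: "real k \<le> B"
    and kd: "(2 * real n - 1) * exp (- real k / (2 * (real n)^2)) < \<delta>"
    using arith_main[OF n d] unfolding k_def B_def by auto
  define A :: "'d algorithm" where "A = alg n k \<epsilon>"
  define z :: "nat \<Rightarrow> (real ^ 'd) \<Rightarrow> real" where "z = (\<lambda>i\<in>{..<n}. \<lambda>w. 0)"
  have zS: "z \<in> Sigma_class n"
  proof -
    have "finite_sum_obj n z w = 0" for w unfolding finite_sum_obj_def z_def by simp
    hence "bdd_below (range (finite_sum_obj n z))" by (intro bdd_belowI[of _ 0]) auto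
    moreover have "z \<in> {..<n} \<rightarrow>\<^sub>E UNIV" unfolding z_def by simp
    ultimately show ?thesis unfolding Sigma_class_def by simp
  qed
  have "(SUP fs \<in> (Sigma_class n :: (nat \<Rightarrow> (real ^ 'd) \<Rightarrow> real) set). fail_prob n k A \<epsilon> fs)
        \<le> (2 * real n - 1) * exp (- real k / (2 * (real n)^2))"
    unfolding A_def using zS by (intro cSUP_least fail_bound[OF n k0 eps]) auto
  hence "(SUP fs \<in> (Sigma_class n :: (nat \<Rightarrow> (real ^ 'd) \<Rightarrow> real) set). fail_prob n k A \<epsilon> fs) < \<delta>"
    using kd by linarith
  hence mem: "ereal (real k) \<in> {ereal (real k) | k. \<exists>A :: 'd algorithm.
            (SUP fs \<in> (Sigma_class n :: (nat \<Rightarrow> (real ^ 'd) \<Rightarrow> real) set). fail_prob n k A \<epsilon> fs) < \<delta>}"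
    by blast
  have "minimax_complexity TYPE('d) n \<epsilon> \<delta> \<le> ereal (real k)"
    unfolding minimax_complexity_def by (rule Inf_lower[OF mem])
  also have "\<dots> \<le> ereal B" using kB by simp
  finally show ?thesis unfolding B_def .
qed

end
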